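(* Let $f:\mathbb{R}\to[0,\infty)$ be a bounded probability density such that $\int_\mathbb{R}|x|^\epsilon f(x)\,\mathrm{d}x<\infty$ for some $\epsilon>0$. If $h\in L^\infty(\mathbb{R})\cap L^q(\mathbb{R})$ for some $q\in(1,\infty)$, then $\Phi_n(h)\in L^p(\mathbb{R})$ for every $p\in((1-\epsilon)q,\infty)\cap[1,\infty)$ and every $n\in\mathbb{N}$.
   Context: $f_1:=f$, $f_{k+1}:=f_k*f$, i.e. $f_{k+1}(x)=\int_\mathbb{R} f_k(x-y)f(y)\,\mathrm{d}y$. For $n\in\mathbb{N}$ and $h\in L^\infty(\mathbb{R})$, the function $\Phi_n(h)$ is defined by $\Phi_n(h)(x):=2\int_{\{z:\,|z|>(|x|-3)/2\}}f_n(z)\,h(x-z)\,\mathrm{d}z$ for $x\in\mathbb{R}$. *)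

theory Defs
  imports "HOL-Analysis.Analysis"
begin

definition conv :: "(real \<Rightarrow> real) \<Rightarrow> (real \<Rightarrow> real) \<Rightarrow> real \<Rightarrow> real" where
  "conv g f x = (LINT y|lborel. g (x - y) * f y)"

text \<open>fconv f k is the k-fold convolution power f_k (for k \<ge> 1); fconv f 0 is set to f as well (unused).\<close>
fun fconv :: "(real \<Rightarrow> real) \<Rightarrow> nat \<Rightarrow> real \<Rightarrow> real" where
  "fconv f 0 = f"
| "fconv f (Suc 0) = f"
| "fconv f (Suc (Suc k)) = conv (fconv f (Suc k)) f"

definition Phi :: "(real \<Rightarrow> real) \<Rightarrow> nat \<Rightarrow> (real \<Rightarrow> real) \<Rightarrow> real \<Rightarrow> real" where
  "Phi f n h x = 2 * (LINT z|lborel. indicator {z. \<bar>z\<bar> > (\<bar>x\<bar> - 3) / 2} z * (fconv f n z * h (x - z)))"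

end

theory Submission
  imports Defs
begin

lemma ennreal_integral_le:
  fixes F :: "'a \<Rightarrow> real"
  assumes "F \<in> borel_measurable M" "\<And>x. F x \<ge> 0"
  shows "ennreal (integral\<^sup>L M F) \<le> (\<integral>\<^sup>+x. ennreal (F x) \<partial>M)"
proof -
  have "integral\<^sup>L M F = enn2real (\<integral>\<^sup>+ x. ennreal (F x) \<partial>M)"
    by (rule integral_eq_nn_integral) (use assms in auto)
  then show ?thesis by (simp add: ennreal_enn2real_if)
qed

lemma ennreal_abs_integral_le:
  fixes F :: "'a \<Rightarrow> real"
  assumes "F \<in> borel_measurable M"
  shows "ennreal \<bar>integral\<^sup>L M F\<bar> \<le> (\<integral>\<^sup>+x. ennreal \<bar>F x\<bar> \<partial>M)"
proof -
  have "\<bar>integral\<^sup>L M F\<bar> \<le> integral\<^sup>L M (\<lambda>x. \<bar>F x\<bar>)"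
    using integral_norm_bound[of M F] by simp
  then have "ennreal \<bar>integral\<^sup>L M F\<bar> \<le> ennreal (integral\<^sup>L M (\<lambda>x. \<bar>F x\<bar>))"
    using ennreal_leI by blast
  also have "\<dots> \<le> (\<integral>\<^sup>+x. ennreal \<bar>F x\<bar> \<partial>M)"
    by (rule ennreal_integral_le) (use assms in auto)
  finally show ?thesis .
qed

lemma meas_test:
  fixes g h :: "real \<Rightarrow> real"
  assumes [measurable]: "g \<in> borel_measurable borel" "h \<in> borel_measurable borel"
  shows "(\<lambda>x. LINT z|lborel. indicator {z. \<bar>z\<bar> > (\<bar>x\<bar> - 3) / 2} z * (g z * h (x - z))) \<in> borel_measurable borel"
proof -
  have e: "\<And>x z. indicator {z. \<bar>z\<bar> > (\<bar>x\<bar> - 3) / 2} z = (if \<bar>z\<bar> > (\<bar>x\<bar> - 3) / 2 then 1 else (0::real))"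
    by (simp add: indicator_def)
  show ?thesis unfolding e
    by measurable
qed

lemma conv_meas:
  fixes g f :: "real \<Rightarrow> real"
  assumes [measurable]: "g \<in> borel_measurable borel" "f \<in> borel_measurable borel"
  shows "conv g f \<in> borel_measurable borel"
  unfolding conv_def by measurable



lemma v_ineq: "(1 + \<bar>x::real\<bar>) powr e \<le> (1 + \<bar>x - y\<bar>) powr e * (1 + \<bar>y\<bar>) powr e" if "e \<ge> 0"
proof -
  have "1 + \<bar>x\<bar> \<le> (1 + \<bar>x - y\<bar>) * (1 + \<bar>y\<bar>)"
  proof -
    have "\<bar>x\<bar> \<le> \<bar>x - y\<bar> + \<bar>y\<bar>" by linarith
    moreover have "0 \<le> \<bar>x - y\<bar> * \<bar>y\<bar>" by simp
    moreover have "(1 + \<bar>x - y\<bar>) * (1 + \<bar>y\<bar>) = 1 + \<bar>x - y\<bar> + \<bar>y\<bar> + \<bar>x - y\<bar> * \<bar>y\<bar>"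
      by (simp add: algebra_simps)
    ultimately show ?thesis by linarith
  qed
  then have "(1 + \<bar>x\<bar>) powr e \<le> ((1 + \<bar>x - y\<bar>) * (1 + \<bar>y\<bar>)) powr e"
    by (intro powr_mono2) (use that in auto)
  also have "\<dots> = (1 + \<bar>x - y\<bar>) powr e * (1 + \<bar>y\<bar>) powr e"
    by (simp add: powr_mult)
  finally show ?thesis .
qed

lemma translate_nn:
  fixes F :: "real \<Rightarrow> ennreal"
  assumes [measurable]: "F \<in> borel_measurable borel"
  shows "(\<integral>\<^sup>+x. F (x - y) \<partial>lborel) = (\<integral>\<^sup>+x. F x \<partial>lborel)"
  using nn_integral_real_affine[of F 1 "-y"] by (simp add: one_ennreal_def[symmetric])

lemma conv_moment:
  fixes G f :: "real \<Rightarrow> real"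
  assumes [measurable]: "G \<in> borel_measurable borel" "f \<in> borel_measurable borel"
    and Gn: "\<And>x. G x \<ge> 0" and fn: "\<And>x. f x \<ge> 0" and e: "e \<ge> 0"
  shows "(\<integral>\<^sup>+x. ennreal (conv G f x * (1 + \<bar>x\<bar>) powr e) \<partial>lborel)
     \<le> (\<integral>\<^sup>+x. ennreal (G x * (1 + \<bar>x\<bar>) powr e) \<partial>lborel) * (\<integral>\<^sup>+x. ennreal (f x * (1 + \<bar>x\<bar>) powr e) \<partial>lborel)"
proof -
  let ?v = "\<lambda>x::real. (1 + \<bar>x\<bar>) powr e"
  have "(\<integral>\<^sup>+x. ennreal (conv G f x * ?v x) \<partial>lborel) \<le>
        (\<integral>\<^sup>+x. (\<integral>\<^sup>+y. ennreal (G (x - y) * f y * ?v x) \<partial>lborel) \<partial>lborel)"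
  proof (rule nn_integral_mono)
    fix x
    have c0: "conv G f x \<ge> 0" unfolding conv_def by (rule Bochner_Integration.integral_nonneg) (intro mult_nonneg_nonneg Gn fn)
    have "ennreal (conv G f x) \<le> (\<integral>\<^sup>+y. ennreal (G (x - y) * f y) \<partial>lborel)"
      unfolding conv_def by (rule ennreal_integral_le) (auto intro!: mult_nonneg_nonneg Gn fn)
    then have "ennreal (conv G f x) * ennreal (?v x) \<le> (\<integral>\<^sup>+y. ennreal (G (x - y) * f y) \<partial>lborel) * ennreal (?v x)"
      by (rule mult_right_mono) simp
    also have "\<dots> = (\<integral>\<^sup>+y. ennreal (G (x - y) * f y) * ennreal (?v x) \<partial>lborel)"
      by (rule nn_integral_multc[symmetric]) simp
    also have "\<dots> = (\<integral>\<^sup>+y. ennreal (G (x - y) * f y * ?v x) \<partial>lborel)"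
      by (intro nn_integral_cong ennreal_mult[symmetric] mult_nonneg_nonneg Gn fn) simp
    finally show "ennreal (conv G f x * ?v x) \<le> (\<integral>\<^sup>+y. ennreal (G (x - y) * f y * ?v x) \<partial>lborel)"
      using c0 by (subst ennreal_mult) simp_all
  qed
  also have "\<dots> = (\<integral>\<^sup>+y. (\<integral>\<^sup>+x. ennreal (G (x - y) * f y * ?v x) \<partial>lborel) \<partial>lborel)"
    by (rule lborel_pair.Fubini'[symmetric]) measurable
  also have "\<dots> \<le> (\<integral>\<^sup>+y. (\<integral>\<^sup>+x. ennreal (G (x - y) * ?v (x - y)) * ennreal (f y * ?v y) \<partial>lborel) \<partial>lborel)"
  proof (intro nn_integral_mono)
    fix x y
    have a: "0 \<le> G (x - y) * f y" by (intro mult_nonneg_nonneg Gn fn)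
    have "G (x - y) * f y * ?v x \<le> G (x - y) * f y * (?v (x - y) * ?v y)"
      by (intro mult_left_mono v_ineq e a)
    also have "\<dots> = (G (x - y) * ?v (x - y)) * (f y * ?v y)" by simp
    finally have "ennreal (G (x - y) * f y * ?v x) \<le> ennreal ((G (x - y) * ?v (x - y)) * (f y * ?v y))"
      by (rule ennreal_leI)
    then show "ennreal (G (x - y) * f y * ?v x) \<le> ennreal (G (x - y) * ?v (x - y)) * ennreal (f y * ?v y)"
      by (subst (asm) ennreal_mult) (simp_all add: Gn fn)
  qed
  also have "\<dots> = (\<integral>\<^sup>+y. (\<integral>\<^sup>+x. ennreal (G (x - y) * ?v (x - y)) \<partial>lborel) * ennreal (f y * ?v y) \<partial>lborel)"
    by (intro nn_integral_cong nn_integral_multc) simp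
  also have "\<dots> = (\<integral>\<^sup>+y. (\<integral>\<^sup>+x. ennreal (G x * ?v x) \<partial>lborel) * ennreal (f y * ?v y) \<partial>lborel)"
    by (intro nn_integral_cong, subst translate_nn[where F="\<lambda>x. ennreal (G x * ?v x)"]) auto
  also have "\<dots> = (\<integral>\<^sup>+x. ennreal (G x * ?v x) \<partial>lborel) * (\<integral>\<^sup>+y. ennreal (f y * ?v y) \<partial>lborel)"
    by (rule nn_integral_cmult) simp
  finally show ?thesis .
qed



lemma fconv_props:
  fixes f :: "real \<Rightarrow> real"
  assumes [measurable]: "f \<in> borel_measurable borel" and fn: "\<And>x. f x \<ge> 0" and e: "e \<ge> 0"
    and fm: "(\<integral>\<^sup>+x. ennreal (f x * (1 + \<bar>x\<bar>) powr e) \<partial>lborel) < \<infinity>"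
    and n: "n \<ge> 1"
  shows "fconv f n \<in> borel_measurable borel \<and> (\<forall>x. fconv f n x \<ge> 0) \<and>
    (\<integral>\<^sup>+x. ennreal (fconv f n x * (1 + \<bar>x\<bar>) powr e) \<partial>lborel) < \<infinity>"
proof -
  have "\<And>k. fconv f (Suc k) \<in> borel_measurable borel \<and> (\<forall>x. fconv f (Suc k) x \<ge> 0) \<and>
    (\<integral>\<^sup>+x. ennreal (fconv f (Suc k) x * (1 + \<bar>x\<bar>) powr e) \<partial>lborel) < \<infinity>"
  proof -
    fix k show "fconv f (Suc k) \<in> borel_measurable borel \<and> (\<forall>x. fconv f (Suc k) x \<ge> 0) \<and>
    (\<integral>\<^sup>+x. ennreal (fconv f (Suc k) x * (1 + \<bar>x\<bar>) powr e) \<partial>lborel) < \<infinity>"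
    proof (induction k)
      case 0
      have "fconv f (Suc 0) = f" by simp
      then show ?case using fn fm assms(1) by metis
    next
      case (Suc k)
      let ?G = "fconv f (Suc k)"
      have Gm[measurable]: "?G \<in> borel_measurable borel" and Gn: "\<And>x. ?G x \<ge> 0"
        and Gf: "(\<integral>\<^sup>+x. ennreal (?G x * (1 + \<bar>x\<bar>) powr e) \<partial>lborel) < \<infinity>"
        using Suc by auto
      have eq: "fconv f (Suc (Suc k)) = conv ?G f" by simp
      have "conv ?G f \<in> borel_measurable borel" unfolding conv_def by measurable
      moreover have "\<forall>x. conv ?G f x \<ge> 0"
        unfolding conv_def by (intro allI Bochner_Integration.integral_nonneg mult_nonneg_nonneg Gn fn)
      moreover have "(\<integral>\<^sup>+x. ennreal (conv ?G f x * (1 + \<bar>x\<bar>) powr e) \<partial>lborel) < \<infinity>"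
      proof -
        have "(\<integral>\<^sup>+x. ennreal (?G x * (1 + \<bar>x\<bar>) powr e) \<partial>lborel) * (\<integral>\<^sup>+x. ennreal (f x * (1 + \<bar>x\<bar>) powr e) \<partial>lborel) < \<infinity>"
          using Gf fm by (simp add: ennreal_mult_less_top)
        then show ?thesis using conv_moment[OF Gm assms(1) Gn fn e] by (rule le_less_trans[rotated])
      qed
      ultimately show ?case unfolding eq by blast
    qed
  qed
  moreover obtain k where "n = Suc k" using n by (cases n) auto
  ultimately show ?thesis by blast
qed



lemma young_pt:
  fixes H c r :: real
  assumes "r > 1" "c > 0" "H \<ge> 0"
  shows "H \<le> (1/r) * c powr (1 - r) * H powr r + (1 - 1/r) * c"
proof (cases "H = 0")
  case True then show ?thesis using assms by simp
next
  case False
  then have Hp: "H > 0" using assms by simp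
  have "(H powr r * c powr (1 - r)) powr (1/r) * c powr (1 - 1/r) \<le> (1/r) * (H powr r * c powr (1 - r)) + (1 - 1/r) * c"
    by (rule Youngs_inequality_0) (use assms Hp in auto)
  moreover have "(H powr r * c powr (1 - r)) powr (1/r) * c powr (1 - 1/r) = H"
  proof -
    have "(H powr r * c powr (1 - r)) powr (1/r) = H powr (r * (1/r)) * c powr ((1 - r) * (1/r))"
      using Hp assms by (simp add: powr_mult powr_powr)
    also have "\<dots> = H * c powr ((1 - r) / r)" using assms Hp by simp
    finally have "(H powr r * c powr (1 - r)) powr (1/r) * c powr (1 - 1/r) = H * (c powr ((1 - r) / r) * c powr (1 - 1/r))"
      by simp
    also have "c powr ((1 - r) / r) * c powr (1 - 1/r) = c powr ((1 - r) / r + (1 - 1/r))"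
      by (simp add: powr_add)
    also have "(1 - r) / r + (1 - 1/r) = 0" using assms by (simp add: field_simps)
    finally show ?thesis using assms by simp
  qed
  ultimately show ?thesis by (simp add: algebra_simps)
qed

lemma jensen_nn:
  fixes w H :: "'a \<Rightarrow> real"
  assumes [measurable]: "w \<in> borel_measurable M" "H \<in> borel_measurable M"
    and wn: "\<And>x. w x \<ge> 0" and Hn: "\<And>x. H x \<ge> 0" and r: "r > 1"
    and T: "(\<integral>\<^sup>+x. ennreal (w x) \<partial>M) = ennreal T0" and T0: "T0 \<ge> 0"
    and K: "(\<integral>\<^sup>+x. ennreal (w x * H x powr r) \<partial>M) = ennreal K0" and K0: "K0 \<ge> 0"
  shows "(\<integral>\<^sup>+x. ennreal (w x * H x) \<partial>M) \<le> ennreal (T0 powr (1 - 1/r) * K0 powr (1/r))"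
proof (cases "T0 = 0 \<or> K0 = 0")
  case True
  have "AE x in M. w x * H x = 0"
  proof (cases "T0 = 0")
    case True
    then have "AE x in M. ennreal (w x) = 0"
      using T by (subst nn_integral_0_iff_AE[symmetric]) auto
    then show ?thesis by eventually_elim (use wn in simp)
  next
    case False
    then have "K0 = 0" using \<open>T0 = 0 \<or> K0 = 0\<close> by simp
    then have "AE x in M. ennreal (w x * H x powr r) = 0"
      using K by (subst nn_integral_0_iff_AE[symmetric]) auto
    then show ?thesis
    proof eventually_elim
      fix x assume "ennreal (w x * H x powr r) = 0"
      moreover have "0 \<le> w x * H x powr r" using wn[of x] by simp
      ultimately have "w x * H x powr r = 0" by (simp add: ennreal_eq_0_iff)
      then have "w x = 0 \<or> H x powr r = 0" by simp
      then show "w x * H x = 0" by auto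
    qed
  qed
  then have "(\<integral>\<^sup>+x. ennreal (w x * H x) \<partial>M) = 0"
    by (subst nn_integral_0_iff_AE) (auto elim!: eventually_mono)
  then show ?thesis by simp
next
  case False
  then have Tp: "T0 > 0" and Kp: "K0 > 0" using T0 K0 by auto
  define c where "c = (K0 / T0) powr (1/r)"
  have cp: "c > 0" using Tp Kp by (simp add: c_def)
  have "(\<integral>\<^sup>+x. ennreal (w x * H x) \<partial>M) \<le>
    (\<integral>\<^sup>+x. ennreal ((1/r) * c powr (1 - r)) * ennreal (w x * H x powr r) + ennreal ((1 - 1/r) * c) * ennreal (w x) \<partial>M)"
  proof (rule nn_integral_mono)
    fix x
    have "w x * H x \<le> w x * ((1/r) * c powr (1 - r) * H x powr r + (1 - 1/r) * c)"
      by (intro mult_left_mono young_pt r cp Hn wn)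
    also have "\<dots> = ((1/r) * c powr (1 - r)) * (w x * H x powr r) + ((1 - 1/r) * c) * w x"
      by (simp add: algebra_simps)
    finally have "ennreal (w x * H x) \<le> ennreal (((1/r) * c powr (1 - r)) * (w x * H x powr r) + ((1 - 1/r) * c) * w x)"
      by (rule ennreal_leI)
    also have "\<dots> = ennreal ((1/r) * c powr (1 - r)) * ennreal (w x * H x powr r) + ennreal ((1 - 1/r) * c) * ennreal (w x)"
      using r cp wn[of x] by (simp add: ennreal_plus[symmetric] ennreal_mult[symmetric] del: ennreal_plus)
    finally show "ennreal (w x * H x) \<le> ennreal ((1/r) * c powr (1 - r)) * ennreal (w x * H x powr r) + ennreal ((1 - 1/r) * c) * ennreal (w x)" .
  qed
  also have "\<dots> = ennreal ((1/r) * c powr (1 - r)) * ennreal K0 + ennreal ((1 - 1/r) * c) * ennreal T0"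
    by (subst nn_integral_add) (auto simp: nn_integral_cmult K T)
  also have "\<dots> = ennreal ((1/r) * (c powr (1 - r) * K0) + (1 - 1/r) * (c * T0))"
    using r cp Tp Kp by (simp add: ennreal_plus[symmetric] ennreal_mult[symmetric] del: ennreal_plus)
  also have "(1/r) * (c powr (1 - r) * K0) + (1 - 1/r) * (c * T0) = T0 powr (1 - 1/r) * K0 powr (1/r)"
  proof -
    have a: "c powr (1 - r) * K0 = T0 powr (1 - 1/r) * K0 powr (1/r)"
    proof -
      have "c powr (1 - r) = K0 powr ((1 - r)/r) / T0 powr ((1 - r)/r)"
        unfolding c_def using Tp Kp by (simp add: powr_powr powr_divide)
      moreover have "K0 powr ((1 - r)/r) * K0 = K0 powr (1/r)"
      proof -
        have "K0 powr ((1 - r)/r) * K0 = K0 powr ((1 - r)/r) * K0 powr 1" using Kp by simp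
        also have "\<dots> = K0 powr ((1 - r)/r + 1)" using Kp by (simp add: powr_add)
        also have "(1 - r)/r + 1 = 1/r" using r by (simp add: field_simps)
        finally show ?thesis .
      qed
      moreover have "1 / T0 powr ((1 - r)/r) = T0 powr (1 - 1/r)"
      proof -
        have "1 / T0 powr ((1 - r)/r) = T0 powr (- ((1 - r)/r))" using Tp by (simp add: powr_minus_divide)
        also have "- ((1 - r)/r) = 1 - 1/r" using r by (simp add: field_simps)
        finally show ?thesis .
      qed
      ultimately show ?thesis
        by (metis (no_types, lifting) mult.commute times_divide_eq_left times_divide_eq_right mult_1_right)
    qed
    have b: "c * T0 = T0 powr (1 - 1/r) * K0 powr (1/r)"
    proof -
      have "c = K0 powr (1/r) / T0 powr (1/r)"
        unfolding c_def using Tp Kp by (simp add: powr_divide)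
      moreover have "T0 / T0 powr (1/r) = T0 powr (1 - 1/r)"
        using Tp by (simp add: powr_diff)
      ultimately show ?thesis
        by (metis (no_types, lifting) mult.commute times_divide_eq_left times_divide_eq_right)
    qed
    show ?thesis unfolding a b by (simp add: algebra_simps)
  qed
  finally show ?thesis .
qed



lemma powdecay:
  fixes \<gamma> :: real assumes g: "\<gamma> > 1"
  shows "(\<integral>\<^sup>+x. ennreal ((1 + \<bar>x\<bar>) powr (-\<gamma>)) \<partial>lborel) < \<infinity>"
proof -
  define F where "F = (\<lambda>x::real. ennreal (x powr (-\<gamma>)) * indicator {1..} x)"
  have Fm[measurable]: "F \<in> borel_measurable borel" unfolding F_def by measurable
  have hi: "((\<lambda>x::real. x powr (-\<gamma>)) has_integral -(1 powr (-\<gamma>+1)) / (-\<gamma>+1)) {1..}"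
    by (rule has_integral_powr_to_inf) (use g in auto)
  have IF: "(\<integral>\<^sup>+x. F x \<partial>lborel) = ennreal (-(1 powr (-\<gamma>+1)) / (-\<gamma>+1))"
    unfolding F_def by (rule nn_integral_has_integral_lebesgue'[OF _ hi]) simp
  have IF2: "(\<integral>\<^sup>+x. F (-x) \<partial>lborel) = (\<integral>\<^sup>+x. F x \<partial>lborel)"
    using nn_integral_real_affine[OF Fm, of "-1" 0] by simp
  have "(\<integral>\<^sup>+x. ennreal ((1 + \<bar>x\<bar>) powr (-\<gamma>)) \<partial>lborel) \<le>
     (\<integral>\<^sup>+x. indicator {-1..1} x + F x + F (-x) \<partial>lborel)"
  proof (rule nn_integral_mono)
    fix x :: real
    show "ennreal ((1 + \<bar>x\<bar>) powr (-\<gamma>)) \<le> indicator {-1..1} x + F x + F (-x)"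
    proof (cases "\<bar>x\<bar> \<le> 1")
      case True
      have "1 \<le> (1 + \<bar>x\<bar>) powr \<gamma>" using g by (intro ge_one_powr_ge_zero) auto
      then have "(1 + \<bar>x\<bar>) powr (-\<gamma>) \<le> 1" by (simp add: powr_minus_divide)
      then have "ennreal ((1 + \<bar>x\<bar>) powr (-\<gamma>)) \<le> 1" by (simp add: ennreal_le_1)
      moreover have "indicator {-1..1} x = (1::ennreal)" using True by (simp add: indicator_def abs_le_iff)
      ultimately show ?thesis by (metis add.commute add_increasing2 zero_le)
    next
      case False
      then have "1 \<le> \<bar>x\<bar>" by simp
      then have "(1 + \<bar>x\<bar>) powr (-\<gamma>) \<le> \<bar>x\<bar> powr (-\<gamma>)" using g
        by (intro powr_mono2') auto
      then have le: "ennreal ((1 + \<bar>x\<bar>) powr (-\<gamma>)) \<le> ennreal (\<bar>x\<bar> powr (-\<gamma>))" by (rule ennreal_leI)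
      show ?thesis
      proof (cases "x \<ge> 1")
        case True
        then have "F x = ennreal (\<bar>x\<bar> powr (-\<gamma>))" by (simp add: F_def)
        then show ?thesis using le by (metis add.commute add.left_commute add_increasing2 zero_le)
      next
        case False
        then have "-x \<ge> 1" using \<open>1 \<le> \<bar>x\<bar>\<close> by linarith
        then have "F (-x) = ennreal (\<bar>x\<bar> powr (-\<gamma>))" by (simp add: F_def)
        then show ?thesis using le by (metis add_increasing zero_le)
      qed
    qed
  qed
  also have "\<dots> = (\<integral>\<^sup>+x. indicator {-1..1::real} x \<partial>lborel) + (\<integral>\<^sup>+x. F x \<partial>lborel) + (\<integral>\<^sup>+x. F (-x) \<partial>lborel)"
  proof -
    have m1: "(\<lambda>x::real. indicator {-1..1} x :: ennreal) \<in> borel_measurable lborel" by measurable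
    have m2: "F \<in> borel_measurable lborel" "(\<lambda>x. F (-x)) \<in> borel_measurable lborel" by measurable
    show ?thesis
      by (simp add: nn_integral_add m1 m2)
  qed
  also have "\<dots> = 2 + ennreal (-(1 powr (-\<gamma>+1)) / (-\<gamma>+1)) + ennreal (-(1 powr (-\<gamma>+1)) / (-\<gamma>+1))"
    using IF IF2 by simp
  also have "\<dots> < \<infinity>" by simp
  finally show ?thesis .
qed



definition ind :: "real \<Rightarrow> real \<Rightarrow> real" where
  "ind x z = (if (\<bar>x\<bar> - 3) / 2 < \<bar>z\<bar> then 1 else 0)"

lemma ind_indicator: "indicator {z. \<bar>z\<bar> > (\<bar>x\<bar> - 3) / 2} z = ind x z"
  by (simp add: ind_def indicator_def)

lemma ind_nonneg: "ind x z \<ge> 0" by (simp add: ind_def)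

lemma ind_weight:
  assumes "s \<ge> 0"
  shows "ind x z * (1 + \<bar>x\<bar>) powr s \<le> 4 powr s * (1 + \<bar>z\<bar>) powr s"
proof (cases "(\<bar>x\<bar> - 3) / 2 < \<bar>z\<bar>")
  case True
  then have "\<bar>x\<bar> < 2 * \<bar>z\<bar> + 3" by (simp add: field_simps)
  moreover have "0 \<le> \<bar>z\<bar>" by simp
  ultimately have "1 + \<bar>x\<bar> \<le> 4 * (1 + \<bar>z\<bar>)" by (smt (verit))
  then have "(1 + \<bar>x\<bar>) powr s \<le> (4 * (1 + \<bar>z\<bar>)) powr s" using assms by (auto intro!: powr_mono2)
  also have "(4 * (1 + \<bar>z\<bar>)) powr s = 4 powr s * (1 + \<bar>z\<bar>) powr s" using powr_mult[of 4 "1 + \<bar>z\<bar>" s] by simp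
  finally show ?thesis using True by (simp add: ind_def)
qed (simp add: ind_def)

context
  fixes g H :: "real \<Rightarrow> real" and \<epsilon> :: real
  assumes gm[measurable]: "g \<in> borel_measurable borel" and gn: "\<And>x. g x \<ge> 0"
    and Hm[measurable]: "H \<in> borel_measurable borel" and Hn: "\<And>x. H x \<ge> 0"
    and eps: "\<epsilon> > 0"
begin

lemma tail:
  "(\<integral>\<^sup>+z. ennreal (ind x z * g z) \<partial>lborel) \<le>
     ennreal (4 powr \<epsilon> * (1 + \<bar>x\<bar>) powr (-\<epsilon>)) * (\<integral>\<^sup>+z. ennreal (g z * (1 + \<bar>z\<bar>) powr \<epsilon>) \<partial>lborel)"
proof -
  have "(\<integral>\<^sup>+z. ennreal (ind x z * g z) \<partial>lborel) \<le>
      (\<integral>\<^sup>+z. ennreal (4 powr \<epsilon> * (1 + \<bar>x\<bar>) powr (-\<epsilon>)) * ennreal (g z * (1 + \<bar>z\<bar>) powr \<epsilon>) \<partial>lborel)"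
  proof (rule nn_integral_mono)
    fix z
    have "ind x z * (1 + \<bar>x\<bar>) powr \<epsilon> * (1 + \<bar>x\<bar>) powr (-\<epsilon>) \<le> 4 powr \<epsilon> * (1 + \<bar>z\<bar>) powr \<epsilon> * (1 + \<bar>x\<bar>) powr (-\<epsilon>)"
      by (intro mult_right_mono ind_weight) (use eps in auto)
    moreover have "(1 + \<bar>x\<bar>) powr \<epsilon> * (1 + \<bar>x\<bar>) powr (-\<epsilon>) = 1"
      by (simp add: powr_add[symmetric])
    ultimately have "ind x z \<le> 4 powr \<epsilon> * (1 + \<bar>x\<bar>) powr (-\<epsilon>) * (1 + \<bar>z\<bar>) powr \<epsilon>"
      by (simp add: algebra_simps)
    then have "ind x z * g z \<le> (4 powr \<epsilon> * (1 + \<bar>x\<bar>) powr (-\<epsilon>) * (1 + \<bar>z\<bar>) powr \<epsilon>) * g z"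
      by (rule mult_right_mono[OF _ gn[of z]])
    also have "\<dots> = (4 powr \<epsilon> * (1 + \<bar>x\<bar>) powr (-\<epsilon>)) * (g z * (1 + \<bar>z\<bar>) powr \<epsilon>)"
      by (simp add: algebra_simps)
    finally have "ind x z * g z \<le> (4 powr \<epsilon> * (1 + \<bar>x\<bar>) powr (-\<epsilon>)) * (g z * (1 + \<bar>z\<bar>) powr \<epsilon>)" .
    then have "ennreal (ind x z * g z) \<le> ennreal ((4 powr \<epsilon> * (1 + \<bar>x\<bar>) powr (-\<epsilon>)) * (g z * (1 + \<bar>z\<bar>) powr \<epsilon>))"
      by (rule ennreal_leI)
    also have "\<dots> = ennreal (4 powr \<epsilon> * (1 + \<bar>x\<bar>) powr (-\<epsilon>)) * ennreal (g z * (1 + \<bar>z\<bar>) powr \<epsilon>)"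
      by (rule ennreal_mult) (use gn in auto)
    finally show "ennreal (ind x z * g z) \<le> ennreal (4 powr \<epsilon> * (1 + \<bar>x\<bar>) powr (-\<epsilon>)) * ennreal (g z * (1 + \<bar>z\<bar>) powr \<epsilon>)" .
  qed
  also have "\<dots> = ennreal (4 powr \<epsilon> * (1 + \<bar>x\<bar>) powr (-\<epsilon>)) * (\<integral>\<^sup>+z. ennreal (g z * (1 + \<bar>z\<bar>) powr \<epsilon>) \<partial>lborel)"
    by (rule nn_integral_cmult) simp
  finally show ?thesis .
qed

lemma Kint:
  assumes s: "0 \<le> s" "s \<le> \<epsilon>"
  shows "(\<integral>\<^sup>+x. ennreal ((1 + \<bar>x\<bar>) powr s) * (\<integral>\<^sup>+z. ennreal (ind x z * g z * H (x - z) powr r) \<partial>lborel) \<partial>lborel)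
    \<le> ennreal (4 powr s) * (\<integral>\<^sup>+z. ennreal (g z * (1 + \<bar>z\<bar>) powr \<epsilon>) \<partial>lborel) * (\<integral>\<^sup>+y. ennreal (H y powr r) \<partial>lborel)"
proof -
  have [measurable]: "(\<lambda>(x, z). ind x z) \<in> borel_measurable (borel \<Otimes>\<^sub>M borel)"
    unfolding ind_def by measurable
  have "(\<integral>\<^sup>+x. ennreal ((1 + \<bar>x\<bar>) powr s) * (\<integral>\<^sup>+z. ennreal (ind x z * g z * H (x - z) powr r) \<partial>lborel) \<partial>lborel)
     = (\<integral>\<^sup>+x. (\<integral>\<^sup>+z. ennreal ((1 + \<bar>x\<bar>) powr s) * ennreal (ind x z * g z * H (x - z) powr r) \<partial>lborel) \<partial>lborel)"
    by (intro nn_integral_cong nn_integral_cmult[symmetric]) (simp add: ind_def)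
  also have "\<dots> \<le> (\<integral>\<^sup>+x. (\<integral>\<^sup>+z. ennreal (4 powr s) * ennreal (g z * (1 + \<bar>z\<bar>) powr \<epsilon>) * ennreal (H (x - z) powr r) \<partial>lborel) \<partial>lborel)"
  proof (intro nn_integral_mono)
    fix x z
    have a: "ind x z * (1 + \<bar>x\<bar>) powr s \<le> 4 powr s * (1 + \<bar>z\<bar>) powr \<epsilon>"
    proof -
      have "(1 + \<bar>z\<bar>) powr s \<le> (1 + \<bar>z\<bar>) powr \<epsilon>" using s by (intro powr_mono) auto
      then show ?thesis using ind_weight[OF s(1), of x z] by (smt (verit) mult_left_mono powr_ge_zero)
    qed
    have "(1 + \<bar>x\<bar>) powr s * (ind x z * g z * H (x - z) powr r) = (ind x z * (1 + \<bar>x\<bar>) powr s) * (g z * H (x - z) powr r)"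
      by (simp add: algebra_simps)
    also have "\<dots> \<le> (4 powr s * (1 + \<bar>z\<bar>) powr \<epsilon>) * (g z * H (x - z) powr r)"
      by (intro mult_right_mono a mult_nonneg_nonneg gn) simp
    also have "\<dots> = 4 powr s * (g z * (1 + \<bar>z\<bar>) powr \<epsilon>) * H (x - z) powr r" by (simp add: algebra_simps)
    finally have "ennreal ((1 + \<bar>x\<bar>) powr s * (ind x z * g z * H (x - z) powr r)) \<le> ennreal (4 powr s * (g z * (1 + \<bar>z\<bar>) powr \<epsilon>) * H (x - z) powr r)"
      by (rule ennreal_leI)
    then show "ennreal ((1 + \<bar>x\<bar>) powr s) * ennreal (ind x z * g z * H (x - z) powr r) \<le> ennreal (4 powr s) * ennreal (g z * (1 + \<bar>z\<bar>) powr \<epsilon>) * ennreal (H (x - z) powr r)"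
      using gn[of z] by (simp add: ennreal_mult ind_nonneg)
  qed
  also have "\<dots> = (\<integral>\<^sup>+z. (\<integral>\<^sup>+x. ennreal (4 powr s) * ennreal (g z * (1 + \<bar>z\<bar>) powr \<epsilon>) * ennreal (H (x - z) powr r) \<partial>lborel) \<partial>lborel)"
    by (rule lborel_pair.Fubini') measurable
  also have "\<dots> = (\<integral>\<^sup>+z. ennreal (4 powr s) * ennreal (g z * (1 + \<bar>z\<bar>) powr \<epsilon>) * (\<integral>\<^sup>+x. ennreal (H (x - z) powr r) \<partial>lborel) \<partial>lborel)"
    by (intro nn_integral_cong nn_integral_cmult) simp
  also have "\<dots> = (\<integral>\<^sup>+z. ennreal (4 powr s) * ennreal (g z * (1 + \<bar>z\<bar>) powr \<epsilon>) * (\<integral>\<^sup>+y. ennreal (H y powr r) \<partial>lborel) \<partial>lborel)"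
    by (intro nn_integral_cong, subst translate_nn[where F="\<lambda>x. ennreal (H x powr r)"]) auto
  also have "\<dots> = ennreal (4 powr s) * (\<integral>\<^sup>+z. ennreal (g z * (1 + \<bar>z\<bar>) powr \<epsilon>) \<partial>lborel) * (\<integral>\<^sup>+y. ennreal (H y powr r) \<partial>lborel)"
    by (simp add: nn_integral_multc nn_integral_cmult)
  finally show ?thesis .
qed

end



lemma phi_pt:
  fixes g h :: "real \<Rightarrow> real" and r :: real
  assumes gm[measurable]: "g \<in> borel_measurable borel" and gn: "\<And>x. g x \<ge> 0"
    and hm[measurable]: "h \<in> borel_measurable borel" and r: "r > 1"
    and Tf: "(\<integral>\<^sup>+z. ennreal (ind x z * g z) \<partial>lborel) < \<infinity>"
    and Kf: "(\<integral>\<^sup>+z. ennreal (ind x z * g z * \<bar>h (x - z)\<bar> powr r) \<partial>lborel) < \<infinity>"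
  shows "\<bar>2 * (LINT z|lborel. indicator {z. \<bar>z\<bar> > (\<bar>x\<bar> - 3) / 2} z * (g z * h (x - z)))\<bar> powr r
    \<le> 2 powr r * enn2real (\<integral>\<^sup>+z. ennreal (ind x z * g z) \<partial>lborel) powr (r - 1)
        * enn2real (\<integral>\<^sup>+z. ennreal (ind x z * g z * \<bar>h (x - z)\<bar> powr r) \<partial>lborel)"
proof -
  define T0 where "T0 = enn2real (\<integral>\<^sup>+z. ennreal (ind x z * g z) \<partial>lborel)"
  define K0 where "K0 = enn2real (\<integral>\<^sup>+z. ennreal (ind x z * g z * \<bar>h (x - z)\<bar> powr r) \<partial>lborel)"
  have T0n: "T0 \<ge> 0" and K0n: "K0 \<ge> 0" by (simp_all add: T0_def K0_def)
  have Te: "(\<integral>\<^sup>+z. ennreal (ind x z * g z) \<partial>lborel) = ennreal T0"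
    using Tf unfolding T0_def by (simp add: ennreal_enn2real_if)
  have Ke: "(\<integral>\<^sup>+z. ennreal (ind x z * g z * \<bar>h (x - z)\<bar> powr r) \<partial>lborel) = ennreal K0"
    using Kf unfolding K0_def by (simp add: ennreal_enn2real_if)
  have [measurable]: "(\<lambda>z. ind x z) \<in> borel_measurable borel" unfolding ind_def by measurable
  let ?L = "LINT z|lborel. indicator {z. \<bar>z\<bar> > (\<bar>x\<bar> - 3) / 2} z * (g z * h (x - z))"
  have "ennreal \<bar>?L\<bar> \<le> (\<integral>\<^sup>+z. ennreal \<bar>indicator {z. \<bar>z\<bar> > (\<bar>x\<bar> - 3) / 2} z * (g z * h (x - z))\<bar> \<partial>lborel)"
    by (rule ennreal_abs_integral_le) (simp add: ind_indicator)
  also have "\<dots> = (\<integral>\<^sup>+z. ennreal (ind x z * g z * \<bar>h (x - z)\<bar>) \<partial>lborel)"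
    unfolding ind_indicator by (intro nn_integral_cong) (simp add: abs_mult ind_nonneg gn)
  also have "\<dots> \<le> ennreal (T0 powr (1 - 1/r) * K0 powr (1/r))"
    by (rule jensen_nn[where w="\<lambda>z. ind x z * g z" and H="\<lambda>z. \<bar>h (x - z)\<bar>" and r=r, OF _ _ _ _ r Te T0n _ K0n])
       (use Ke gn in \<open>auto intro!: mult_nonneg_nonneg simp: ind_nonneg\<close>)
  finally have "\<bar>?L\<bar> \<le> T0 powr (1 - 1/r) * K0 powr (1/r)"
    by (simp add: ennreal_le_iff)
  then have "\<bar>2 * ?L\<bar> \<le> 2 * (T0 powr (1 - 1/r) * K0 powr (1/r))" by simp
  then have "\<bar>2 * ?L\<bar> powr r \<le> (2 * (T0 powr (1 - 1/r) * K0 powr (1/r))) powr r"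
    using r by (intro powr_mono2) auto
  also have "\<dots> = 2 powr r * (T0 powr (1 - 1/r)) powr r * (K0 powr (1/r)) powr r"
    using T0n K0n by (simp add: powr_mult)
  also have "\<dots> = 2 powr r * T0 powr (r - 1) * K0"
  proof -
    have "(T0 powr (1 - 1/r)) powr r = T0 powr (r - 1)"
    proof -
      have "(1 - 1/r) * r = r - 1" using r by (simp add: field_simps)
      then show ?thesis by (simp add: powr_powr)
    qed
    moreover have "(K0 powr (1/r)) powr r = K0"
      using r K0n by (simp add: powr_powr)
    ultimately show ?thesis by simp
  qed
  finally show ?thesis unfolding T0_def K0_def .
qed



lemma f_moment_1:
  fixes f :: "real \<Rightarrow> real" and \<epsilon> :: real
  assumes [measurable]: "f \<in> borel_measurable borel" and fn: "\<And>x. f x \<ge> 0" and eps: "\<epsilon> > 0"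
    and fi: "integrable lborel f" and fmi: "integrable lborel (\<lambda>x. \<bar>x\<bar> powr \<epsilon> * f x)"
  shows "(\<integral>\<^sup>+x. ennreal (f x * (1 + \<bar>x\<bar>) powr \<epsilon>) \<partial>lborel) < \<infinity>"
proof -
  have a: "(\<integral>\<^sup>+x. ennreal (f x) \<partial>lborel) < \<infinity>"
    using fi fn by (simp add: integrable_iff_bounded)
  have b: "(\<integral>\<^sup>+x. ennreal (\<bar>x\<bar> powr \<epsilon> * f x) \<partial>lborel) < \<infinity>"
    using fmi fn by (simp add: integrable_iff_bounded abs_mult)
  have "(\<integral>\<^sup>+x. ennreal (f x * (1 + \<bar>x\<bar>) powr \<epsilon>) \<partial>lborel) \<le>
      (\<integral>\<^sup>+x. ennreal (2 powr \<epsilon>) * ennreal (f x) + ennreal (2 powr \<epsilon>) * ennreal (\<bar>x\<bar> powr \<epsilon> * f x) \<partial>lborel)"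
  proof (rule nn_integral_mono)
    fix x :: real
    have "(1 + \<bar>x\<bar>) powr \<epsilon> \<le> 2 powr \<epsilon> * (1 + \<bar>x\<bar> powr \<epsilon>)"
    proof (cases "\<bar>x\<bar> \<le> 1")
      case True
      then have "(1 + \<bar>x\<bar>) powr \<epsilon> \<le> 2 powr \<epsilon>" using eps by (intro powr_mono2) auto
      moreover have "2 powr \<epsilon> * 1 \<le> 2 powr \<epsilon> * (1 + \<bar>x\<bar> powr \<epsilon>)"
        by (intro mult_left_mono) auto
      ultimately show ?thesis by (metis mult_1_right order_trans)
    next
      case False
      then have "(1 + \<bar>x\<bar>) powr \<epsilon> \<le> (2 * \<bar>x\<bar>) powr \<epsilon>" using eps by (intro powr_mono2) auto
      also have "\<dots> = 2 powr \<epsilon> * \<bar>x\<bar> powr \<epsilon>" using powr_mult[of 2 "\<bar>x\<bar>" \<epsilon>] by simp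
      also have "\<dots> \<le> 2 powr \<epsilon> * (1 + \<bar>x\<bar> powr \<epsilon>)"
        by (intro mult_left_mono) auto
      finally show ?thesis .
    qed
    then have "f x * (1 + \<bar>x\<bar>) powr \<epsilon> \<le> f x * (2 powr \<epsilon> * (1 + \<bar>x\<bar> powr \<epsilon>))"
      by (rule mult_left_mono) (rule fn)
    also have "\<dots> = 2 powr \<epsilon> * f x + 2 powr \<epsilon> * (\<bar>x\<bar> powr \<epsilon> * f x)" by (simp add: algebra_simps)
    finally have "ennreal (f x * (1 + \<bar>x\<bar>) powr \<epsilon>) \<le> ennreal (2 powr \<epsilon> * f x + 2 powr \<epsilon> * (\<bar>x\<bar> powr \<epsilon> * f x))"
      by (rule ennreal_leI)
    also have "\<dots> = ennreal (2 powr \<epsilon>) * ennreal (f x) + ennreal (2 powr \<epsilon>) * ennreal (\<bar>x\<bar> powr \<epsilon> * f x)"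
      using fn[of x] by (simp add: ennreal_plus[symmetric] ennreal_mult[symmetric] del: ennreal_plus)
    finally show "ennreal (f x * (1 + \<bar>x\<bar>) powr \<epsilon>) \<le> ennreal (2 powr \<epsilon>) * ennreal (f x) + ennreal (2 powr \<epsilon>) * ennreal (\<bar>x\<bar> powr \<epsilon> * f x)" .
  qed
  also have "\<dots> = ennreal (2 powr \<epsilon>) * (\<integral>\<^sup>+x. ennreal (f x) \<partial>lborel) + ennreal (2 powr \<epsilon>) * (\<integral>\<^sup>+x. ennreal (\<bar>x\<bar> powr \<epsilon> * f x) \<partial>lborel)"
    by (subst nn_integral_add) (auto simp: nn_integral_cmult)
  also have "\<dots> < \<infinity>" using a b by (simp add: ennreal_mult_less_top)
  finally show ?thesis .
qed

lemma exponent_fact: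
  fixes p q \<epsilon> :: real
  assumes "(1 - \<epsilon>) * q < p" "1 \<le> p" "p < q" "\<epsilon> > 0" "q > 1"
  shows "\<epsilon> * q * p / (q - p) > 1"
proof -
  have "q - p < \<epsilon> * q" using assms(1) by (simp add: algebra_simps)
  moreover have "\<epsilon> * q * 1 \<le> \<epsilon> * q * p" using assms by (intro mult_left_mono) auto
  ultimately have "q - p < \<epsilon> * q * p" by simp
  then show ?thesis using assms by (simp add: field_simps)
qed



lemma ennreal_bound_top:
  fixes Y C :: real and K :: ennreal
  assumes h: "K < \<infinity> \<Longrightarrow> Y \<le> C * enn2real K" and C: "C > 0"
  shows "ennreal Y \<le> ennreal C * K"
proof (cases "K = \<infinity>")
  case True
  then have "ennreal C * K = \<infinity>" using C by (simp add: ennreal_mult_top)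
  then show ?thesis by simp
next
  case False
  then have T: "K < \<infinity>" by (simp add: less_top)
  have "Y \<le> C * enn2real K" using h[OF T] .
  then have "ennreal Y \<le> ennreal (C * enn2real K)" by (rule ennreal_leI)
  also have "\<dots> = ennreal C * K"
    using T C by (subst ennreal_mult) (simp_all add: ennreal_enn2real_if)
  finally show ?thesis .
qed

lemma ennreal_bound_top2:
  fixes Y C W Z :: real and K :: ennreal
  assumes h: "K < \<infinity> \<Longrightarrow> Y \<le> C * W * enn2real K + Z" and C: "C > 0" and W: "W > 0" and Z: "Z \<ge> 0"
  shows "ennreal Y \<le> ennreal C * (ennreal W * K) + ennreal Z"
proof (cases "K = \<infinity>")
  case True
  then have "ennreal C * (ennreal W * K) = \<infinity>" using C W by (simp add: ennreal_mult_top)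
  then show ?thesis by simp
next
  case False
  then have T: "K < \<infinity>" by (simp add: less_top)
  have "Y \<le> C * W * enn2real K + Z" using h[OF T] .
  then have "ennreal Y \<le> ennreal (C * W * enn2real K + Z)" by (rule ennreal_leI)
  also have "\<dots> = ennreal (C * W * enn2real K) + ennreal Z"
    using C W Z by (intro ennreal_plus) auto
  also have "ennreal (C * W * enn2real K) = ennreal C * (ennreal W * K)"
  proof -
    have "ennreal (C * W * enn2real K) = ennreal (C * W) * ennreal (enn2real K)"
      using C W by (intro ennreal_mult) auto
    also have "\<dots> = ennreal C * ennreal W * K"
      using C W T by (simp add: ennreal_mult ennreal_enn2real_if)
    finally show ?thesis by (simp add: mult.assoc)
  qed
  finally show ?thesis .
qed

lemma alg1:
  fixes T0 B v \<epsilon> r :: real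
  assumes "0 \<le> T0" "T0 \<le> B * v powr (-\<epsilon>)" "v > 0" "r \<ge> 1" "B > 0"
  shows "T0 powr (r - 1) \<le> B powr (r - 1) * v powr (-\<epsilon> * (r - 1))"
proof -
  have "T0 powr (r - 1) \<le> (B * v powr (-\<epsilon>)) powr (r - 1)"
    using assms by (intro powr_mono2) auto
  also have "\<dots> = B powr (r - 1) * (v powr (-\<epsilon>)) powr (r - 1)"
    using assms by (simp add: powr_mult)
  also have "(v powr (-\<epsilon>)) powr (r - 1) = v powr (-\<epsilon> * (r - 1))"
    by (simp add: powr_powr)
  finally show ?thesis .
qed

lemma young_split:
  fixes P v \<epsilon> p q :: real
  assumes P: "P \<ge> 0" and v: "v > 0" and pq: "0 < p" "p < q" and eps: "\<epsilon> > 0"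
  shows "P powr p \<le> P powr q * v powr (\<epsilon> * q) + v powr (-(\<epsilon> * q * p / (q - p)))"
proof (cases "P = 0")
  case True then show ?thesis using pq by simp
next
  case False
  then have Pp: "P > 0" using P by simp
  define a where "a = P powr q * v powr (\<epsilon> * q)"
  define b where "b = v powr (-(\<epsilon> * q * p / (q - p)))"
  have ap: "a > 0" and bp: "b > 0" using Pp v by (simp_all add: a_def b_def)
  have "a powr (p/q) * b powr (1 - p/q) \<le> (p/q) * a + (1 - p/q) * b"
    by (rule Youngs_inequality_0) (use pq ap bp in auto)
  moreover have "a powr (p/q) * b powr (1 - p/q) = P powr p"
  proof -
    have "a powr (p/q) = P powr p * v powr (\<epsilon> * p)"
      unfolding a_def using Pp v pq by (simp add: powr_mult powr_powr)
    moreover have "b powr (1 - p/q) = v powr (-(\<epsilon> * p))"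
    proof -
      have "-(\<epsilon> * q * p / (q - p)) * (1 - p/q) = -(\<epsilon> * p)" using pq by (simp add: field_simps)
      then show ?thesis unfolding b_def by (simp add: powr_powr)
    qed
    moreover have "v powr (\<epsilon> * p) * v powr (-(\<epsilon> * p)) = 1"
      using v by (simp add: powr_add[symmetric])
    ultimately show ?thesis by (simp add: algebra_simps)
  qed
  moreover have "(p/q) * a + (1 - p/q) * b \<le> a + b"
  proof -
    have "p/q \<le> 1" "0 \<le> p/q" using pq by auto
    then have "(p/q) * a \<le> 1 * a" "(1 - p/q) * b \<le> 1 * b" using ap bp by (intro mult_right_mono; simp)+
    then show ?thesis by linarith
  qed
  ultimately show ?thesis unfolding a_def b_def by linarith
qed

theorem lemma3p4:
  fixes f h :: "real \<Rightarrow> real" and \<epsilon> q :: real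
  assumes f_meas: "f \<in> borel_measurable lborel"
    and f_nonneg: "\<And>x. f x \<ge> 0"
    and f_bdd: "\<exists>C. \<forall>x. f x \<le> C"
    and f_int: "integrable lborel f"
    and f_prob: "(LINT x|lborel. f x) = 1"
    and eps_pos: "\<epsilon> > 0"
    and f_moment: "integrable lborel (\<lambda>x. \<bar>x\<bar> powr \<epsilon> * f x)"
    and h_meas: "h \<in> borel_measurable lborel"
    and h_Linf: "\<exists>C. AE x in lborel. \<bar>h x\<bar> \<le> C"
    and q_gt: "1 < q"
    and h_Lq: "integrable lborel (\<lambda>x. \<bar>h x\<bar> powr q)"
  shows "\<forall>p n. (1 - \<epsilon>) * q < p \<and> 1 \<le> p \<and> n \<ge> 1 \<longrightarrow>
           Phi f n h \<in> borel_measurable lborel \<and>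
           integrable lborel (\<lambda>x. \<bar>Phi f n h x\<bar> powr p)"
proof (intro allI impI, elim conjE)
  fix p :: real and n :: nat
  assume pq: "(1 - \<epsilon>) * q < p" and p1: "1 \<le> p" and n1: "n \<ge> 1"
  have fm[measurable]: "f \<in> borel_measurable borel" using f_meas by simp
  have hm[measurable]: "h \<in> borel_measurable borel" using h_meas by simp
  define g where "g = fconv f n"
  have mf: "(\<integral>\<^sup>+x. ennreal (f x * (1 + \<bar>x\<bar>) powr \<epsilon>) \<partial>lborel) < \<infinity>"
    by (rule f_moment_1[OF fm f_nonneg eps_pos f_int f_moment])
  have gprops: "g \<in> borel_measurable borel \<and> (\<forall>x. g x \<ge> 0) \<and>
    (\<integral>\<^sup>+x. ennreal (g x * (1 + \<bar>x\<bar>) powr \<epsilon>) \<partial>lborel) < \<infinity>"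
    unfolding g_def by (rule fconv_props[OF fm f_nonneg _ mf n1]) (use eps_pos in simp)
  have gm[measurable]: "g \<in> borel_measurable borel" and gn: "\<And>x. g x \<ge> 0"
    and mg: "(\<integral>\<^sup>+x. ennreal (g x * (1 + \<bar>x\<bar>) powr \<epsilon>) \<partial>lborel) < \<infinity>"
    using gprops by auto
  define m0 where "m0 = enn2real (\<integral>\<^sup>+x. ennreal (g x * (1 + \<bar>x\<bar>) powr \<epsilon>) \<partial>lborel)"
  have m0n: "m0 \<ge> 0" by (simp add: m0_def)
  have me: "(\<integral>\<^sup>+x. ennreal (g x * (1 + \<bar>x\<bar>) powr \<epsilon>) \<partial>lborel) = ennreal m0"
    using mg unfolding m0_def by (simp add: ennreal_enn2real_if)
  define P where "P = (\<lambda>x. 2 * (LINT z|lborel. indicator {z. \<bar>z\<bar> > (\<bar>x\<bar> - 3) / 2} z * (g z * h (x - z))))"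
  have PhiP: "Phi f n h = P" unfolding P_def Phi_def g_def by (rule ext) simp
  have Pm[measurable]: "P \<in> borel_measurable borel"
  proof -
    have "(\<lambda>x. LINT z|lborel. indicator {z. \<bar>z\<bar> > (\<bar>x\<bar> - 3) / 2} z * (g z * h (x - z))) \<in> borel_measurable borel"
      by (rule meas_test[OF gm hm])
    then show ?thesis unfolding P_def by measurable
  qed
  define Tt where "Tt = (\<lambda>x. \<integral>\<^sup>+z. ennreal (ind x z * g z) \<partial>lborel)"
  define T0 where "T0 = (\<lambda>x. enn2real (Tt x))"
  define B where "B = 4 powr \<epsilon> * (m0 + 1)"
  have Bp: "B > 0" using m0n by (simp add: B_def)
  have Tfin: "Tt x < \<infinity>" and T0b: "T0 x \<le> B * (1 + \<bar>x\<bar>) powr (-\<epsilon>)" and T0n: "T0 x \<ge> 0" for x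
  proof -
    have "Tt x \<le> ennreal (4 powr \<epsilon> * (1 + \<bar>x\<bar>) powr (-\<epsilon>)) * ennreal m0"
      unfolding Tt_def me[symmetric]
      by (rule tail[where H="\<lambda>y. \<bar>h y\<bar>", OF gm gn _ _ eps_pos]) auto
    also have "\<dots> = ennreal (4 powr \<epsilon> * (1 + \<bar>x\<bar>) powr (-\<epsilon>) * m0)"
      using m0n by (simp add: ennreal_mult)
    finally have le: "Tt x \<le> ennreal (4 powr \<epsilon> * (1 + \<bar>x\<bar>) powr (-\<epsilon>) * m0)" .
    then show "Tt x < \<infinity>" using le_less_trans by fastforce
    then have "Tt x = ennreal (T0 x)" unfolding T0_def by (simp add: ennreal_enn2real_if)
    with le have "T0 x \<le> 4 powr \<epsilon> * (1 + \<bar>x\<bar>) powr (-\<epsilon>) * m0"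
      using m0n by (simp add: ennreal_le_iff)
    also have "\<dots> \<le> B * (1 + \<bar>x\<bar>) powr (-\<epsilon>)"
      unfolding B_def using m0n by (simp add: mult_left_mono mult_right_mono algebra_simps)
    finally show "T0 x \<le> B * (1 + \<bar>x\<bar>) powr (-\<epsilon>)" .
    show "T0 x \<ge> 0" by (simp add: T0_def)
  qed
  define K where "K = (\<lambda>r x. \<integral>\<^sup>+z. ennreal (ind x z * g z * \<bar>h (x - z)\<bar> powr r) \<partial>lborel)"
  have phiK: "\<bar>P x\<bar> powr r \<le> 2 powr r * T0 x powr (r - 1) * enn2real (K r x)" if "r > 1" "K r x < \<infinity>" for r x
    unfolding P_def T0_def Tt_def K_def
    by (rule phi_pt[OF gm gn hm that(1)]) (use Tfin[of x] that(2) in \<open>auto simp: Tt_def K_def\<close>)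
  have "(\<integral>\<^sup>+x. ennreal (\<bar>P x\<bar> powr p) \<partial>lborel) < \<infinity>"
  proof (cases "q \<le> p")
    case True
    then have p1': "p > 1" using q_gt by simp
    obtain M where M: "AE x in lborel. \<bar>h x\<bar> \<le> M" using h_Linf by blast
    define M' where "M' = max M 0"
    have hq: "(\<integral>\<^sup>+y. ennreal (\<bar>h y\<bar> powr q) \<partial>lborel) < \<infinity>"
      using h_Lq by (simp add: integrable_iff_bounded)
    have hp: "(\<integral>\<^sup>+y. ennreal (\<bar>h y\<bar> powr p) \<partial>lborel) < \<infinity>"
    proof -
      have "(\<integral>\<^sup>+y. ennreal (\<bar>h y\<bar> powr p) \<partial>lborel) \<le> (\<integral>\<^sup>+y. ennreal (M' powr (p - q)) * ennreal (\<bar>h y\<bar> powr q) \<partial>lborel)"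
      proof (rule nn_integral_mono_AE)
        show "AE y in lborel. ennreal (\<bar>h y\<bar> powr p) \<le> ennreal (M' powr (p - q)) * ennreal (\<bar>h y\<bar> powr q)"
          using M
        proof eventually_elim
          fix y assume hy: "\<bar>h y\<bar> \<le> M"
          have "\<bar>h y\<bar> powr p \<le> M' powr (p - q) * \<bar>h y\<bar> powr q"
          proof (cases "h y = 0")
            case True then show ?thesis by simp
          next
            case False
            have "\<bar>h y\<bar> powr p = \<bar>h y\<bar> powr (p - q) * \<bar>h y\<bar> powr q"
              using False by (simp add: powr_add[symmetric])
            also have "\<dots> \<le> M' powr (p - q) * \<bar>h y\<bar> powr q"
              using hy \<open>q \<le> p\<close> by (intro mult_right_mono powr_mono2) (auto simp: M'_def)
            finally show ?thesis .
          qed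
          then have "ennreal (\<bar>h y\<bar> powr p) \<le> ennreal (M' powr (p - q) * \<bar>h y\<bar> powr q)"
            by (rule ennreal_leI)
          also have "\<dots> = ennreal (M' powr (p - q)) * ennreal (\<bar>h y\<bar> powr q)"
            by (rule ennreal_mult) auto
          finally show "ennreal (\<bar>h y\<bar> powr p) \<le> ennreal (M' powr (p - q)) * ennreal (\<bar>h y\<bar> powr q)" .
        qed
      qed
      also have "\<dots> = ennreal (M' powr (p - q)) * (\<integral>\<^sup>+y. ennreal (\<bar>h y\<bar> powr q) \<partial>lborel)"
        by (rule nn_integral_cmult) simp
      also have "\<dots> < \<infinity>" using hq by (simp add: ennreal_mult_less_top)
      finally show ?thesis .
    qed
    define C where "C = 2 powr p * B powr (p - 1)"
    have Cp: "C > 0" using Bp by (simp add: C_def)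
    have pt: "ennreal (\<bar>P x\<bar> powr p) \<le> ennreal C * K p x" for x
    proof (rule ennreal_bound_top[OF _ Cp])
      assume True: "K p x < \<infinity>"
      have "\<bar>P x\<bar> powr p \<le> 2 powr p * T0 x powr (p - 1) * enn2real (K p x)"
        by (rule phiK[OF p1' True])
      also have "\<dots> \<le> 2 powr p * B powr (p - 1) * enn2real (K p x)"
      proof -
        have a: "T0 x powr (p - 1) \<le> B powr (p - 1) * (1 + \<bar>x\<bar>) powr (-\<epsilon> * (p - 1))"
          by (rule alg1[OF T0n T0b]) (use Bp p1 in auto)
        have "(1 + \<bar>x\<bar>) powr (-\<epsilon> * (p - 1)) \<le> 1"
        proof -
          have "1 \<le> (1 + \<bar>x\<bar>) powr (\<epsilon> * (p - 1))" using eps_pos p1 by (intro ge_one_powr_ge_zero) auto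
          then show ?thesis by (simp add: powr_minus_divide)
        qed
        then have "B powr (p - 1) * (1 + \<bar>x\<bar>) powr (-\<epsilon> * (p - 1)) \<le> B powr (p - 1) * 1"
          by (rule mult_left_mono) simp
        with a have "T0 x powr (p - 1) \<le> B powr (p - 1)" by simp
        then have "2 powr p * T0 x powr (p - 1) \<le> 2 powr p * B powr (p - 1)"
          by (rule mult_left_mono) simp
        then show ?thesis by (rule mult_right_mono) simp
      qed
      also have "\<dots> = C * enn2real (K p x)" by (simp only: C_def)
      finally show "\<bar>P x\<bar> powr p \<le> C * enn2real (K p x)" .
    qed
    have "(\<integral>\<^sup>+x. ennreal (\<bar>P x\<bar> powr p) \<partial>lborel) \<le> (\<integral>\<^sup>+x. ennreal C * K p x \<partial>lborel)"
      by (rule nn_integral_mono) (rule pt)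
    also have "\<dots> = ennreal C * (\<integral>\<^sup>+x. ennreal ((1 + \<bar>x\<bar>) powr 0) * K p x \<partial>lborel)"
    proof -
      have [measurable]: "(\<lambda>(x, z). ind x z) \<in> borel_measurable (borel \<Otimes>\<^sub>M borel)"
        unfolding ind_def by measurable
      have "(\<lambda>x. K p x) \<in> borel_measurable lborel" unfolding K_def by measurable
      moreover have "\<And>x::real. 1 + \<bar>x\<bar> \<noteq> 0" using abs_ge_zero by (metis add_less_same_cancel1 not_one_less_zero order_less_le_trans zero_less_one add_pos_nonneg less_irrefl)
      ultimately show ?thesis by (simp add: nn_integral_cmult)
    qed
    also have "\<dots> \<le> ennreal C * (ennreal (4 powr 0) * (\<integral>\<^sup>+z. ennreal (g z * (1 + \<bar>z\<bar>) powr \<epsilon>) \<partial>lborel) * (\<integral>\<^sup>+y. ennreal (\<bar>h y\<bar> powr p) \<partial>lborel))"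
      unfolding K_def
      by (intro mult_left_mono Kint[where H="\<lambda>y. \<bar>h y\<bar>", OF gm gn _ _ eps_pos]) (use eps_pos in auto)
    also have "\<dots> < \<infinity>" using mg hp by (simp add: ennreal_mult_less_top)
    finally show ?thesis .
  next
    case False
    then have pq': "p < q" by simp
    define \<gamma> where "\<gamma> = \<epsilon> * q * p / (q - p)"
    have g1: "\<gamma> > 1" unfolding \<gamma>_def by (rule exponent_fact[OF pq p1 pq' eps_pos q_gt])
    have hq: "(\<integral>\<^sup>+y. ennreal (\<bar>h y\<bar> powr q) \<partial>lborel) < \<infinity>"
      using h_Lq by (simp add: integrable_iff_bounded)
    define C where "C = 2 powr q * B powr (q - 1)"
    have Cp: "C > 0" using Bp by (simp add: C_def)
    have pt: "ennreal (\<bar>P x\<bar> powr p) \<le> ennreal C * (ennreal ((1 + \<bar>x\<bar>) powr \<epsilon>) * K q x) + ennreal ((1 + \<bar>x\<bar>) powr (-\<gamma>))" for x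
    proof (rule ennreal_bound_top2[OF _ Cp])
      assume True: "K q x < \<infinity>"
      let ?v = "1 + \<bar>x\<bar>"
      have "\<bar>P x\<bar> powr p \<le> \<bar>P x\<bar> powr q * ?v powr (\<epsilon> * q) + ?v powr (-\<gamma>)"
        unfolding \<gamma>_def by (rule young_split) (use pq' p1 eps_pos in auto)
      also have "\<bar>P x\<bar> powr q \<le> 2 powr q * T0 x powr (q - 1) * enn2real (K q x)"
        by (rule phiK[OF q_gt True])
      also have "\<dots> \<le> 2 powr q * (B powr (q - 1) * ?v powr (-\<epsilon> * (q - 1))) * enn2real (K q x)"
        by (intro mult_right_mono mult_left_mono alg1[OF T0n T0b]) (use Bp q_gt in auto)
      finally have "\<bar>P x\<bar> powr p \<le> 2 powr q * (B powr (q - 1) * ?v powr (-\<epsilon> * (q - 1))) * enn2real (K q x) * ?v powr (\<epsilon> * q) + ?v powr (-\<gamma>)"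
        by (simp add: mult_right_mono)
      also have "2 powr q * (B powr (q - 1) * ?v powr (-\<epsilon> * (q - 1))) * enn2real (K q x) * ?v powr (\<epsilon> * q)
          = C * (?v powr (-\<epsilon> * (q - 1)) * ?v powr (\<epsilon> * q)) * enn2real (K q x)"
        by (simp add: C_def algebra_simps)
      also have "?v powr (-\<epsilon> * (q - 1)) * ?v powr (\<epsilon> * q) = ?v powr \<epsilon>"
      proof -
        have "?v powr (-\<epsilon> * (q - 1)) * ?v powr (\<epsilon> * q) = ?v powr (-\<epsilon> * (q - 1) + \<epsilon> * q)"
          by (simp only: powr_add)
        also have "-\<epsilon> * (q - 1) + \<epsilon> * q = \<epsilon>" by (simp add: algebra_simps)
        finally show ?thesis .
      qed
      finally show "\<bar>P x\<bar> powr p \<le> C * ?v powr \<epsilon> * enn2real (K q x) + ?v powr (-\<gamma>)"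
        by (simp add: mult.assoc mult.commute mult.left_commute)
    qed auto
    have [measurable]: "(\<lambda>(x, z). ind x z) \<in> borel_measurable (borel \<Otimes>\<^sub>M borel)"
      unfolding ind_def by measurable
    have Km: "(\<lambda>x. K q x) \<in> borel_measurable lborel" unfolding K_def by measurable
    have "(\<integral>\<^sup>+x. ennreal (\<bar>P x\<bar> powr p) \<partial>lborel) \<le>
        (\<integral>\<^sup>+x. ennreal C * (ennreal ((1 + \<bar>x\<bar>) powr \<epsilon>) * K q x) + ennreal ((1 + \<bar>x\<bar>) powr (-\<gamma>)) \<partial>lborel)"
      by (rule nn_integral_mono) (rule pt)
    also have "\<dots> = ennreal C * (\<integral>\<^sup>+x. ennreal ((1 + \<bar>x\<bar>) powr \<epsilon>) * K q x \<partial>lborel) + (\<integral>\<^sup>+x. ennreal ((1 + \<bar>x\<bar>) powr (-\<gamma>)) \<partial>lborel)"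
      using Km by (simp add: nn_integral_add nn_integral_cmult)
    also have "\<dots> < \<infinity>"
    proof -
      have "(\<integral>\<^sup>+x. ennreal ((1 + \<bar>x\<bar>) powr \<epsilon>) * K q x \<partial>lborel) \<le>
          ennreal (4 powr \<epsilon>) * (\<integral>\<^sup>+z. ennreal (g z * (1 + \<bar>z\<bar>) powr \<epsilon>) \<partial>lborel) * (\<integral>\<^sup>+y. ennreal (\<bar>h y\<bar> powr q) \<partial>lborel)"
        unfolding K_def
        by (rule Kint[where H="\<lambda>y. \<bar>h y\<bar>", OF gm gn _ _ eps_pos]) (use eps_pos in auto)
      also have "\<dots> < \<infinity>" using mg hq by (simp add: ennreal_mult_less_top)
      finally have "(\<integral>\<^sup>+x. ennreal ((1 + \<bar>x\<bar>) powr \<epsilon>) * K q x \<partial>lborel) < \<infinity>" .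
      then show ?thesis using powdecay[OF g1] by (simp add: ennreal_mult_less_top)
    qed
    finally show ?thesis .
  qed
  then have "integrable lborel (\<lambda>x. \<bar>P x\<bar> powr p)"
    by (subst integrable_iff_bounded) simp
  then show "Phi f n h \<in> borel_measurable lborel \<and> integrable lborel (\<lambda>x. \<bar>Phi f n h x\<bar> powr p)"
    unfolding PhiP by simp
qed


end
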